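(* Let $(a_{ijk})_{i,j\le n,k\le m}$ be real numbers, $S\subset\mathbb{R}^m$ a nonempty finite set and $\varepsilon>0$. Suppose that for each $x\in\mathbb{R}^n$ a set $S_{x,\varepsilon}\subset S$ is chosen (measurably in $x$) such that for every $t\in S$ there is $t'\in S_{x,\varepsilon}$ with $\alpha_A(x\otimes(t-t'))\le\varepsilon\beta_{A,S}(x)$, and let $\mu_{\varepsilon,S}$ be the measure on $\mathbb{R}^n\times S$ given by $\mu_{\varepsilon,S}(D)=\int_{\mathbb{R}^n}\sum_{t\in S_{x,\varepsilon}}\delta_{(x,t)}(D)\,d\gamma_{n,\varepsilon}(x)$. Then for every $(x,t)\in B_2^n\times S$, \[ \mu_{\varepsilon,S} \big(B((x,t),d_A,r(\varepsilon))\big) \geq \frac{1}{2}\exp(-\varepsilon^{-2}/2), \] where $r(\varepsilon)=4\varepsilon^2\mathbb{E}\beta_{A,S}(G_n)+\varepsilon\beta_{A,S}(x)+4\varepsilon\mathbb{E}\alpha_A(G_n\otimes t)$.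
   Context: $G_n$ is a standard Gaussian vector in $\mathbb{R}^n$ and $\gamma_{n,\varepsilon}$ is the distribution of $\varepsilon G_n$; $B_2^n$ is the Euclidean unit ball; $\delta_{(x,t)}$ is the Dirac mass. For $x\in\mathbb{R}^n,t\in\mathbb{R}^m$, $x\otimes t=(x_jt_k)_{j,k}\in\mathbb{R}^{nm}$; for $y=(y_{jk})\in\mathbb{R}^{nm}$, $\alpha_A(y)=\big(\sum_{i}(\sum_{j,k}a_{ijk}y_{jk})^2\big)^{1/2}$. With $g_1,\dots,g_n$ i.i.d. $\mathcal N(0,1)$, $\beta_{A,S}(x)=\mathbb{E}\sup_{t\in S}|\sum_{i,j,k}a_{ijk}g_ix_jt_k|$. The distance is $d_A((x,t),(x',t'))=\alpha_A(x\otimes t-x'\otimes t')$, and $B((x,t),d_A,r)=\{(x',t')\in\mathbb{R}^n\times S:\alpha_A(x\otimes t-x'\otimes t')\le r\}$. *)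

theory Defs
  imports "HOL-Probability.Probability"
begin

text \<open>Coefficient arrays a_{ijk}, i,j indexed by the finite type 'n (so i,j \<le> n),
 k indexed by the finite type 'm.\<close>

definition gauss_density :: "real \<Rightarrow> real^'n \<Rightarrow> real" where
  "gauss_density eps x =
     (1 / (sqrt (2 * pi) * eps)) ^ CARD('n) * exp (- ((norm x)^2) / (2 * eps^2))"

definition gauss_measure :: "real \<Rightarrow> (real^'n) measure" where
  "gauss_measure eps = density lborel (\<lambda>x. ennreal (gauss_density eps x))"

definition tensor :: "real^'n \<Rightarrow> real^'m \<Rightarrow> ('n \<Rightarrow> 'm \<Rightarrow> real)" where
  "tensor x t = (\<lambda>j k. x $ j * t $ k)"

definition alpha_A :: "('n \<Rightarrow> 'n \<Rightarrow> 'm \<Rightarrow> real) \<Rightarrow> ('n \<Rightarrow> 'm \<Rightarrow> real) \<Rightarrow> real" where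
  "alpha_A A y = sqrt (\<Sum>i\<in>UNIV. (\<Sum>j\<in>UNIV. \<Sum>k\<in>UNIV. A i j k * y j k)^2)"

definition beta_AS :: "('n \<Rightarrow> 'n \<Rightarrow> 'm \<Rightarrow> real) \<Rightarrow> (real^'m) set \<Rightarrow> real^'n \<Rightarrow> real" where
  "beta_AS A S x = (\<integral>g. (SUP t\<in>S. \<bar>\<Sum>i\<in>UNIV. \<Sum>j\<in>UNIV. \<Sum>k\<in>UNIV. A i j k * g $ i * x $ j * t $ k\<bar>)
                     \<partial>(gauss_measure 1))"

definition d_A :: "('n \<Rightarrow> 'n \<Rightarrow> 'm \<Rightarrow> real) \<Rightarrow> ((real^'n) \<times> (real^'m)) \<Rightarrow> ((real^'n) \<times> (real^'m)) \<Rightarrow> real" where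
  "d_A A p q = alpha_A A (\<lambda>j k. tensor (fst p) (snd p) j k - tensor (fst q) (snd q) j k)"

definition ball_dA :: "('n \<Rightarrow> 'n \<Rightarrow> 'm \<Rightarrow> real) \<Rightarrow> (real^'m) set \<Rightarrow> ((real^'n) \<times> (real^'m)) \<Rightarrow> real
     \<Rightarrow> ((real^'n) \<times> (real^'m)) set" where
  "ball_dA A S p r = {q. snd q \<in> S \<and> d_A A p q \<le> r}"

definition mu_eps :: "real \<Rightarrow> (real^'n \<Rightarrow> (real^'m) set) \<Rightarrow> ((real^'n) \<times> (real^'m)) set \<Rightarrow> ennreal" where
  "mu_eps eps Sx D = (\<integral>\<^sup>+ x. (\<Sum>t\<in>Sx x. indicator D (x, t)) \<partial>(gauss_measure eps))"

end

theory Submission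
  imports Defs
begin

lemma norm_sq_basis: "(norm (x::real^'n))^2 = (\<Sum>b\<in>Basis. (x \<bullet> b)^2)"
  unfolding power2_norm_eq_inner by (subst euclidean_inner) (simp add: power2_eq_square)

lemma gauss_density_prod:
  assumes "e > 0"
  shows "gauss_density e (x::real^'n) = (\<Prod>b\<in>(Basis::(real^'n) set). normal_density 0 e (x \<bullet> b))"
proof -
  have s: "sqrt (2 * pi * e^2) = sqrt (2*pi) * e" using assms
    by (simp add: real_sqrt_mult)
  have "(\<Prod>b\<in>(Basis::(real^'n) set). normal_density 0 e (x \<bullet> b))
     = (\<Prod>b\<in>(Basis::(real^'n) set). (1 / (sqrt (2 * pi) * e)) * exp (- ((x \<bullet> b)^2) / (2 * e^2)))"
    unfolding normal_density_def s by simp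
  also have "\<dots> = (1 / (sqrt (2 * pi) * e)) ^ card (Basis::(real^'n) set) *
        exp (\<Sum>b\<in>(Basis::(real^'n) set). - ((x \<bullet> b)^2) / (2 * e^2))"
    by (subst prod.distrib) (simp add: exp_sum)
  also have "(\<Sum>b\<in>(Basis::(real^'n) set). - ((x \<bullet> b)^2) / (2 * e^2)) = - ((norm x)^2) / (2*e^2)"
    by (simp add: norm_sq_basis sum_divide_distrib[symmetric] sum_negf)
  finally show ?thesis unfolding gauss_density_def by simp
qed

lemma gauss_density_nonneg: "e > 0 \<Longrightarrow> gauss_density e x \<ge> 0"
  unfolding gauss_density_def by simp

lemma gauss_density_meas[measurable]: "gauss_density e \<in> borel_measurable borel"
  unfolding gauss_density_def by measurable

lemma sets_gauss[simp]: "sets (gauss_measure e) = sets borel"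
  unfolding gauss_measure_def by simp
lemma space_gauss[simp]: "space (gauss_measure e) = UNIV"
  unfolding gauss_measure_def by simp

lemma meas_gauss: "measurable (gauss_measure e) = measurable borel"
  by (intro ext measurable_cong_sets) auto

lemma gauss_total:
  assumes "e > 0"
  shows "emeasure (gauss_measure e :: (real^'n) measure) UNIV = 1"
proof -
  have "emeasure (gauss_measure e :: (real^'n) measure) UNIV = (\<integral>\<^sup>+x. ennreal (gauss_density e (x::real^'n)) \<partial>lborel)"
    unfolding gauss_measure_def by (simp add: emeasure_density)
  also have "\<dots> = (\<integral>\<^sup>+x. (\<Prod>b\<in>(Basis::(real^'n) set). ennreal (normal_density 0 e (x \<bullet> b))) \<partial>lborel)"
    using assms by (simp add: gauss_density_prod prod_ennreal normal_density_nonneg)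
  also have "\<dots> = (\<Prod>b\<in>(Basis::(real^'n) set). (\<integral>\<^sup>+y. ennreal (normal_density 0 e y) \<partial>lborel))"
    by (rule nn_integral_lborel_prod) auto
  also have "\<dots> = 1"
  proof -
    have "(\<integral>\<^sup>+y. ennreal (normal_density 0 e y) \<partial>lborel) = 1"
      using assms by (subst nn_integral_eq_integral) (auto intro: integrable_normal_density simp: integral_normal_density)
    then show ?thesis by simp
  qed
  finally show ?thesis .
qed

lemma gauss_prob: "e > 0 \<Longrightarrow> prob_space (gauss_measure e :: (real^'n) measure)"
  by (rule prob_spaceI) (simp add: gauss_total)

lemma gauss_coord_finite:
  assumes b: "(b::real^'n) \<in> Basis"
  shows "(\<integral>\<^sup>+g. ennreal \<bar>g \<bullet> b\<bar> \<partial>(gauss_measure 1 :: (real^'n) measure)) < \<infinity>"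
proof -
  define f where "f b' y = ennreal (normal_density 0 1 y * (if b' = b then \<bar>y\<bar> else 1))" for b' y
  have "(\<integral>\<^sup>+g. ennreal \<bar>g \<bullet> b\<bar> \<partial>(gauss_measure 1 :: (real^'n) measure))
     = (\<integral>\<^sup>+g. ennreal (gauss_density 1 g) * ennreal \<bar>g \<bullet> b\<bar> \<partial>lborel)"
    unfolding gauss_measure_def by (subst nn_integral_density) auto
  also have "\<dots> = (\<integral>\<^sup>+g. (\<Prod>b'\<in>Basis. f b' (g \<bullet> b')) \<partial>lborel)"
  proof (rule nn_integral_cong)
    fix g :: "real^'n"
    have "(\<Prod>b'\<in>Basis. f b' (g \<bullet> b')) = ennreal (\<Prod>b'\<in>Basis. normal_density 0 1 (g \<bullet> b') * (if b' = b then \<bar>g \<bullet> b'\<bar> else 1))"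
      unfolding f_def by (subst prod_ennreal) (auto intro!: mult_nonneg_nonneg)
    also have "(\<Prod>b'\<in>Basis. normal_density 0 1 (g \<bullet> b') * (if b' = b then \<bar>g \<bullet> b'\<bar> else 1))
       = gauss_density 1 g * \<bar>g \<bullet> b\<bar>"
      using b by (simp add: prod.distrib gauss_density_prod prod.delta)
    finally show "ennreal (gauss_density 1 g) * ennreal \<bar>g \<bullet> b\<bar> = (\<Prod>b'\<in>Basis. f b' (g \<bullet> b'))"
      by (simp add: ennreal_mult gauss_density_nonneg)
  qed
  also have "\<dots> = (\<Prod>b'\<in>Basis. (\<integral>\<^sup>+y. f b' y \<partial>lborel))"
    by (rule nn_integral_lborel_prod) (auto simp: f_def)
  also have "\<dots> < \<infinity>"
  proof -
    have "(\<integral>\<^sup>+y. f b' y \<partial>lborel) < \<infinity>" for b'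
    proof (cases "b' = b")
      case True
      have "integrable lborel (\<lambda>x. normal_density 0 1 x * \<bar>x - 0\<bar>^1)"
        by (rule integrable_normal_moment_abs) simp
      then have "(\<integral>\<^sup>+y. ennreal (norm (normal_density 0 1 y * \<bar>y - 0\<bar>^1)) \<partial>lborel) < \<infinity>"
        by (simp add: integrable_iff_bounded)
      then show ?thesis using True by (simp add: f_def normal_density_nonneg)
    next
      case False
      have "integrable lborel (normal_density 0 1)"
        by (rule integrable_normal_density) simp
      then have "(\<integral>\<^sup>+y. ennreal (norm (normal_density 0 1 y)) \<partial>lborel) < \<infinity>"
        by (simp add: integrable_iff_bounded)
      then show ?thesis using False by (simp add: f_def normal_density_nonneg)
    qed
    then show ?thesis by (simp add: less_top[symmetric] ennreal_prod_eq_top)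
  qed
  finally show ?thesis .
qed

lemma gauss_integrable:
  fixes f :: "real^'n \<Rightarrow> real"
  assumes fm: "f \<in> borel_measurable borel" and fb: "\<And>g. \<bar>f g\<bar> \<le> C * norm g" and C: "C \<ge> 0"
  shows "integrable (gauss_measure 1) f"
proof -
  have "(\<integral>\<^sup>+g. ennreal (norm (f g)) \<partial>(gauss_measure 1 :: (real^'n) measure))
      \<le> (\<integral>\<^sup>+g. ennreal C * (\<Sum>b\<in>Basis. ennreal \<bar>g \<bullet> b\<bar>) \<partial>(gauss_measure 1 :: (real^'n) measure))"
  proof (rule nn_integral_mono)
    fix g :: "real^'n"
    have fg: "\<bar>f g\<bar> \<le> C * (\<Sum>b\<in>Basis. \<bar>g \<bullet> b\<bar>)"
      using fb[of g] norm_le_l1[of g] C by (meson mult_left_mono order.trans)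
    then show "ennreal (norm (f g)) \<le> ennreal C * (\<Sum>b\<in>Basis. ennreal \<bar>g \<bullet> b\<bar>)"
    proof -
      have "ennreal \<bar>f g\<bar> \<le> ennreal (C * (\<Sum>b\<in>Basis. \<bar>g \<bullet> b\<bar>))"
        using fg by (rule ennreal_leI)
      also have "\<dots> = ennreal C * (\<Sum>b\<in>Basis. ennreal \<bar>g \<bullet> b\<bar>)"
        using C by (simp add: ennreal_mult sum_nonneg sum_ennreal)
      finally show ?thesis by simp
    qed
  qed
  also have "\<dots> = ennreal C * (\<Sum>b\<in>Basis. (\<integral>\<^sup>+g. ennreal \<bar>g \<bullet> b\<bar> \<partial>(gauss_measure 1 :: (real^'n) measure)))"
  proof -
    have "(\<integral>\<^sup>+g. (\<Sum>b\<in>Basis. ennreal \<bar>g \<bullet> b\<bar>) \<partial>(gauss_measure 1 :: (real^'n) measure))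
       = (\<Sum>b\<in>Basis. (\<integral>\<^sup>+g. ennreal \<bar>g \<bullet> b\<bar> \<partial>(gauss_measure 1 :: (real^'n) measure)))"
      by (rule nn_integral_sum) (auto simp: meas_gauss)
    moreover have "(\<lambda>g::real^'n. (\<Sum>b\<in>Basis. ennreal \<bar>g \<bullet> b\<bar>)) \<in> borel_measurable (gauss_measure 1)"
      by (simp add: meas_gauss)
    ultimately show ?thesis by (simp only: nn_integral_cmult)
  qed
  also have "\<dots> < \<infinity>"
    proof -
    have "(\<Sum>b\<in>(Basis::(real^'n) set). (\<integral>\<^sup>+g. ennreal \<bar>g \<bullet> b\<bar> \<partial>(gauss_measure 1 :: (real^'n) measure))) < \<infinity>"
      unfolding infinity_ennreal_def by (subst ennreal_sum_less_top) (simp_all add: gauss_coord_finite[unfolded infinity_ennreal_def])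
    then show ?thesis by (simp add: ennreal_mult_less_top)
  qed
  finally show ?thesis
    using fm by (simp add: integrable_iff_bounded meas_gauss)
qed

lemma nn_integral_lborel_scale:
  fixes F :: "'a::euclidean_space \<Rightarrow> ennreal"
  assumes c: "c \<noteq> 0" and [measurable]: "F \<in> borel_measurable borel"
  shows "(\<integral>\<^sup>+y. F y \<partial>lborel) = ennreal (\<bar>c\<bar>^DIM('a)) * (\<integral>\<^sup>+x. F (c *\<^sub>R x) \<partial>lborel)"
  by (subst lborel_affine[OF c, of 0]) (simp add: nn_integral_density nn_integral_distr nn_integral_cmult)

lemma nn_integral_lborel_translate:
  fixes F :: "'a::euclidean_space \<Rightarrow> ennreal"
  assumes [measurable]: "F \<in> borel_measurable borel"
  shows "(\<integral>\<^sup>+y. F y \<partial>lborel) = (\<integral>\<^sup>+z. F (c + z) \<partial>lborel)"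
proof -
  have "(\<integral>\<^sup>+y. F y \<partial>lborel) = (\<integral>\<^sup>+y. F y \<partial>(distr lborel borel ((+) c)))"
    by (simp add: lborel_distr_plus)
  also have "\<dots> = (\<integral>\<^sup>+z. F (c + z) \<partial>lborel)"
    by (simp add: nn_integral_distr)
  finally show ?thesis .
qed

lemma emeasure_gauss:
  "A \<in> sets borel \<Longrightarrow> emeasure (gauss_measure e) A = (\<integral>\<^sup>+y. ennreal (gauss_density e y) * indicator A y \<partial>lborel)"
  unfolding gauss_measure_def by (simp add: emeasure_density nn_integral_set_ennreal)

lemma gauss_scale:
  fixes A :: "(real^'n) set"
  assumes e: "e > 0" and A[measurable]: "A \<in> sets borel"
  shows "emeasure (gauss_measure e) A = emeasure (gauss_measure 1) ((\<lambda>g. e *\<^sub>R g) -` A)"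
proof -
  have pre[measurable]: "(\<lambda>g::real^'n. e *\<^sub>R g) -` A \<in> sets borel"
    using measurable_sets[of "\<lambda>g::real^'n. e *\<^sub>R g" borel borel A] by simp
  have "emeasure (gauss_measure e) A = (\<integral>\<^sup>+y. ennreal (gauss_density e y) * indicator A y \<partial>lborel)"
    by (rule emeasure_gauss) simp
  also have "\<dots> = ennreal (\<bar>e\<bar>^DIM(real^'n)) * (\<integral>\<^sup>+x. ennreal (gauss_density e (e *\<^sub>R x)) * indicator A (e *\<^sub>R x) \<partial>lborel)"
  proof -
    have Fm: "(\<lambda>y::real^'n. ennreal (gauss_density e y) * indicator A y) \<in> borel_measurable borel"
      by measurable
    show ?thesis by (rule nn_integral_lborel_scale[OF _ Fm]) (use e in simp)
  qed
  also have "\<dots> = (\<integral>\<^sup>+x. ennreal (gauss_density 1 x) * indicator ((\<lambda>g. e *\<^sub>R g) -` A) x \<partial>lborel)"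
  proof -
    have eq: "e ^ CARD('n) * gauss_density e (e *\<^sub>R x) = gauss_density 1 x" for x :: "real^'n"
    proof -
      have h1: "e ^ CARD('n) * (1 / (sqrt (2 * pi) * e)) ^ CARD('n) = (1 / sqrt (2 * pi)) ^ CARD('n)"
        using e by (simp add: power_mult_distrib[symmetric])
      have h2: "(norm (e *\<^sub>R x))^2 / (2 * e^2) = (norm x)^2 / 2"
        using e by (simp add: power_mult_distrib)
      have "e ^ CARD('n) * gauss_density e (e *\<^sub>R x) = (e ^ CARD('n) * (1 / (sqrt (2 * pi) * e)) ^ CARD('n)) * exp (- ((norm (e *\<^sub>R x))^2 / (2 * e^2)))"
        by (simp only: gauss_density_def mult.assoc minus_divide_left)
      also have "\<dots> = (1 / sqrt (2 * pi)) ^ CARD('n) * exp (- ((norm x)^2 / 2))"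
        by (simp only: h1 h2)
      also have "\<dots> = gauss_density 1 x"
        unfolding gauss_density_def by simp
      finally show ?thesis .
    qed
    have Gm: "(\<lambda>x::real^'n. ennreal (gauss_density e (e *\<^sub>R x)) * indicator A (e *\<^sub>R x)) \<in> borel_measurable borel"
      by measurable
    have "ennreal (\<bar>e\<bar>^DIM(real^'n)) * (\<integral>\<^sup>+x. ennreal (gauss_density e (e *\<^sub>R x)) * indicator A (e *\<^sub>R x) \<partial>lborel)
       = (\<integral>\<^sup>+x. ennreal (\<bar>e\<bar>^DIM(real^'n)) * (ennreal (gauss_density e (e *\<^sub>R x)) * indicator A (e *\<^sub>R x)) \<partial>lborel)"
      by (rule nn_integral_cmult[symmetric]) (use Gm in simp)
    also have "\<dots> = (\<integral>\<^sup>+x. ennreal (gauss_density 1 x) * indicator ((\<lambda>g. e *\<^sub>R g) -` A) x \<partial>lborel)"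
    proof (rule nn_integral_cong)
      fix x :: "real^'n"
      have "ennreal (\<bar>e\<bar>^DIM(real^'n)) * ennreal (gauss_density e (e *\<^sub>R x)) = ennreal (gauss_density 1 x)"
        using e eq[of x] by (simp add: ennreal_mult[symmetric] gauss_density_nonneg)
      then show "ennreal (\<bar>e\<bar>^DIM(real^'n)) * (ennreal (gauss_density e (e *\<^sub>R x)) * indicator A (e *\<^sub>R x))
         = ennreal (gauss_density 1 x) * indicator ((\<lambda>g. e *\<^sub>R g) -` A) x"
        by (simp add: mult.assoc[symmetric] indicator_def)
    qed
    finally show ?thesis .
  qed
  also have "\<dots> = emeasure (gauss_measure 1) ((\<lambda>g. e *\<^sub>R g) -` A)"
    by (rule emeasure_gauss[symmetric]) (rule pre)
  finally show ?thesis .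
qed

lemma exp_cosh_ge: "2 \<le> exp (a::real) + exp (- a)"
  using exp_ge_add_one_self[of a] exp_ge_add_one_self[of "-a"] by linarith

lemma gauss_density_shift_ineq:
  fixes x z :: "real^'n"
  assumes e: "e > 0"
  shows "exp (- ((norm x)^2) / (2 * e^2)) * gauss_density e z \<le> (gauss_density e (x + z) + gauss_density e (- x + z)) / 2"
proof -
  define C0 where "C0 = (1 / (sqrt (2 * pi) * e)) ^ CARD('n)"
  define a where "a = (x \<bullet> z) / e^2"
  define P where "P = exp (- ((norm x)^2) / (2 * e^2)) * exp (- ((norm z)^2) / (2 * e^2))"
  have C0: "C0 \<ge> 0" using e unfolding C0_def by simp
  have P: "P \<ge> 0" unfolding P_def by simp
  have n1: "(norm (x + z))^2 = (norm x)^2 + 2 * (x \<bullet> z) + (norm z)^2"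
    by (simp add: power2_norm_eq_inner inner_add inner_commute)
  have n2: "(norm (- x + z))^2 = (norm x)^2 - 2 * (x \<bullet> z) + (norm z)^2"
    by (simp add: power2_norm_eq_inner inner_add inner_diff inner_commute)
  have e2: "e^2 > 0" using e by simp
  have d1: "gauss_density e (x + z) = C0 * P * exp (- a)"
  proof -
    have h: "- ((norm (x + z))^2) / (2 * e^2) = (- ((norm x)^2) / (2 * e^2) + - ((norm z)^2) / (2 * e^2)) + - a"
      unfolding n1 a_def using e2 by (simp add: field_simps)
    have "exp (- ((norm (x + z))^2) / (2 * e^2)) = P * exp (- a)"
      unfolding h P_def exp_add by simp
    then show ?thesis unfolding gauss_density_def C0_def by (simp only: mult.assoc)
  qed
  have d2: "gauss_density e (- x + z) = C0 * P * exp (a)"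
  proof -
    have h: "- ((norm (- x + z))^2) / (2 * e^2) = (- ((norm x)^2) / (2 * e^2) + - ((norm z)^2) / (2 * e^2)) + a"
      unfolding n2 a_def using e2 by (simp add: field_simps)
    have "exp (- ((norm (- x + z))^2) / (2 * e^2)) = P * exp (a)"
      unfolding h P_def exp_add by simp
    then show ?thesis unfolding gauss_density_def C0_def by (simp only: mult.assoc)
  qed
  have d0: "exp (- ((norm x)^2) / (2 * e^2)) * gauss_density e z = C0 * P"
    unfolding gauss_density_def C0_def P_def by simp
  have "C0 * P * 2 \<le> C0 * P * (exp a + exp (- a))"
    using exp_cosh_ge[of a] C0 P by (intro mult_left_mono) auto
  then show ?thesis unfolding d0 d1 d2 by (simp add: algebra_simps)
qed

lemma gauss_shift:
  fixes K :: "(real^'n) set" and x :: "real^'n"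
  assumes e: "e > 0" and K[measurable]: "K \<in> sets borel" and sym: "\<And>z. z \<in> K \<Longrightarrow> - z \<in> K"
  shows "ennreal (exp (- ((norm x)^2) / (2 * e^2))) * emeasure (gauss_measure e) K
           \<le> emeasure (gauss_measure e) {y. y - x \<in> K}"
proof -
  define d :: "real^'n \<Rightarrow> real" where "d = gauss_density e"
  define c where "c = exp (- ((norm x)^2) / (2 * e^2))"
  have dm[measurable]: "d \<in> borel_measurable borel" unfolding d_def by simp
  have d_nn: "d v \<ge> 0" for v unfolding d_def using e by (rule gauss_density_nonneg)
  have d_even: "d (- v) = d v" for v unfolding d_def gauss_density_def by simp
  have Kx[measurable]: "{y. y - x \<in> K} \<in> sets borel"
    using measurable_sets[of "\<lambda>y::real^'n. y - x" borel borel K] by (simp add: vimage_def)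
  define L where "L = emeasure (gauss_measure e) {y. y - x \<in> K}"
  have L: "L = (\<integral>\<^sup>+y. ennreal (d y) * indicator {y. y - x \<in> K} y \<partial>lborel)"
    unfolding L_def d_def by (rule emeasure_gauss) simp
  have I1: "L = (\<integral>\<^sup>+z. ennreal (d (x + z)) * indicator K z \<partial>lborel)"
  proof -
    have Fm: "(\<lambda>y. ennreal (d y) * indicator {y. y - x \<in> K} y) \<in> borel_measurable borel"
      by measurable
    have "L = (\<integral>\<^sup>+z. ennreal (d (x + z)) * indicator {y. y - x \<in> K} (x + z) \<partial>lborel)"
      unfolding L by (rule nn_integral_lborel_translate[OF Fm])
    also have "\<dots> = (\<integral>\<^sup>+z. ennreal (d (x + z)) * indicator K z \<partial>lborel)"
      by (rule nn_integral_cong) (simp add: indicator_def)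
    finally show ?thesis .
  qed
  have I2: "L = (\<integral>\<^sup>+z. ennreal (d (- x + z)) * indicator K z \<partial>lborel)"
  proof -
    have Fm: "(\<lambda>y. ennreal (d y) * indicator {y. y - x \<in> K} y) \<in> borel_measurable borel"
      by measurable
    have "L = ennreal (\<bar>-1\<bar>^DIM(real^'n)) * (\<integral>\<^sup>+w. ennreal (d ((-1) *\<^sub>R w)) * indicator {y. y - x \<in> K} ((-1) *\<^sub>R w) \<partial>lborel)"
      unfolding L by (rule nn_integral_lborel_scale[OF _ Fm]) simp
    also have "\<dots> = (\<integral>\<^sup>+w. ennreal (d w) * indicator K (w + x) \<partial>lborel)"
    proof -
      have "indicator {y. y - x \<in> K} (- w) = (indicator K (w + x) :: ennreal)" for w
      proof -
        have "(- w - x \<in> K) = (w + x \<in> K)"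
          using sym[of "- w - x"] sym[of "w + x"] by (auto simp: algebra_simps)
        then show ?thesis by (simp add: indicator_def)
      qed
      then show ?thesis by (simp add: d_even)
    qed
    also have "\<dots> = (\<integral>\<^sup>+z. ennreal (d (- x + z)) * indicator K (- x + z + x) \<partial>lborel)"
    proof -
      have Gm: "(\<lambda>w. ennreal (d w) * indicator K (w + x)) \<in> borel_measurable borel"
        by measurable
      show ?thesis by (rule nn_integral_lborel_translate[OF Gm])
    qed
    also have "\<dots> = (\<integral>\<^sup>+z. ennreal (d (- x + z)) * indicator K z \<partial>lborel)"
      by (simp add: algebra_simps)
    finally show ?thesis .
  qed
  have "ennreal c * emeasure (gauss_measure e) K = ennreal c * (\<integral>\<^sup>+z. ennreal (d z) * indicator K z \<partial>lborel)"
    unfolding d_def by (subst emeasure_gauss) simp_all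
  also have "\<dots> = (\<integral>\<^sup>+z. ennreal c * (ennreal (d z) * indicator K z) \<partial>lborel)"
    by (rule nn_integral_cmult[symmetric]) simp
  also have "\<dots> \<le> (\<integral>\<^sup>+z. ennreal (1/2) * (ennreal (d (x + z)) * indicator K z)
                          + ennreal (1/2) * (ennreal (d (- x + z)) * indicator K z) \<partial>lborel)"
  proof (rule nn_integral_mono)
    fix z :: "real^'n"
    have r: "c * d z \<le> (1/2) * d (x + z) + (1/2) * d (- x + z)"
      using gauss_density_shift_ineq[OF e, of x z] unfolding c_def d_def by simp
    have "ennreal c * ennreal (d z) \<le> ennreal (1/2) * ennreal (d (x + z)) + ennreal (1/2) * ennreal (d (- x + z))"
    proof -
      have "ennreal c * ennreal (d z) = ennreal (c * d z)"
        using d_nn[of z] by (simp add: ennreal_mult c_def)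
      also have "\<dots> \<le> ennreal ((1/2) * d (x + z) + (1/2) * d (- x + z))"
        using r by (rule ennreal_leI)
      also have "\<dots> = ennreal (1/2) * ennreal (d (x + z)) + ennreal (1/2) * ennreal (d (- x + z))"
      proof -
        have p1: "ennreal ((1/2) * d (x + z)) = ennreal (1/2) * ennreal (d (x + z))"
          by (rule ennreal_mult) (simp_all add: d_nn)
        have p2: "ennreal ((1/2) * d (- x + z)) = ennreal (1/2) * ennreal (d (- x + z))"
          by (rule ennreal_mult) (simp_all add: d_nn)
        have "ennreal ((1/2) * d (x + z) + (1/2) * d (- x + z)) = ennreal ((1/2) * d (x + z)) + ennreal ((1/2) * d (- x + z))"
          by (rule ennreal_plus) (simp_all add: d_nn)
        then show ?thesis unfolding p1 p2 .
      qed
      finally show ?thesis .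
    qed
    then show "ennreal c * (ennreal (d z) * indicator K z) \<le> ennreal (1/2) * (ennreal (d (x + z)) * indicator K z)
                          + ennreal (1/2) * (ennreal (d (- x + z)) * indicator K z)"
      by (cases "z \<in> K") (simp_all add: mult.assoc[symmetric])
  qed
  also have "\<dots> = ennreal (1/2) * L + ennreal (1/2) * L"
    apply (subst nn_integral_add)
      apply simp
     apply simp
    apply (subst nn_integral_cmult, simp)
    apply (subst nn_integral_cmult, simp)
    unfolding I1[symmetric] I2[symmetric] by simp
  also have "\<dots> = L"
  proof -
    have "ennreal (1/2) + ennreal (1/2) = ennreal (1/2 + 1/2)"
      by (rule ennreal_plus[symmetric]) auto
    then have h: "ennreal (1/2) + ennreal (1/2) = 1" by simp
    show ?thesis unfolding distrib_right[symmetric] h by simp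
  qed
  finally show ?thesis unfolding c_def L_def .
qed


definition Lf :: "('n::finite \<Rightarrow> 'n \<Rightarrow> 'm::finite \<Rightarrow> real) \<Rightarrow> real^'n \<Rightarrow> real^'n \<Rightarrow> real^'m \<Rightarrow> real" where
  "Lf A g x t = (\<Sum>i\<in>UNIV. \<Sum>j\<in>UNIV. \<Sum>k\<in>UNIV. A i j k * g $ i * x $ j * t $ k)"

definition FF :: "('n::finite \<Rightarrow> 'n \<Rightarrow> 'm::finite \<Rightarrow> real) \<Rightarrow> (real^'m) set \<Rightarrow> real^'n \<Rightarrow> real^'n \<Rightarrow> real" where
  "FF A S g x = (SUP t\<in>S. \<bar>Lf A g x t\<bar>)"

lemma beta_FF: "beta_AS A S x = (\<integral>g. FF A S g x \<partial>(gauss_measure 1))"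
  unfolding beta_AS_def FF_def Lf_def ..

lemma Lf_meas[measurable]: "(\<lambda>g. Lf A g x t) \<in> borel_measurable borel"
  unfolding Lf_def by measurable

lemma Lf_add: "Lf A g (x + y) t = Lf A g x t + Lf A g y t"
  unfolding Lf_def by (simp add: algebra_simps sum.distrib)

lemma Lf_scale: "Lf A g (c *\<^sub>R x) t = c * Lf A g x t"
  unfolding Lf_def by (simp add: sum_distrib_left algebra_simps)

lemma Lf_bound: "\<bar>Lf A g x t\<bar> \<le> (\<Sum>i\<in>UNIV. \<Sum>j\<in>UNIV. \<Sum>k\<in>UNIV. \<bar>A i j k\<bar> * \<bar>t $ k\<bar>) * (norm g * norm x)"
proof -
  have "\<bar>Lf A g x t\<bar> \<le> (\<Sum>i\<in>UNIV. \<Sum>j\<in>UNIV. \<Sum>k\<in>UNIV. \<bar>A i j k * g $ i * x $ j * t $ k\<bar>)"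
    unfolding Lf_def by (rule order.trans[OF sum_abs] sum_mono order.trans[OF sum_abs] order.refl)+
  also have "\<dots> \<le> (\<Sum>i\<in>UNIV. \<Sum>j\<in>UNIV. \<Sum>k\<in>UNIV. \<bar>A i j k\<bar> * \<bar>t $ k\<bar> * (norm g * norm x))"
  proof (intro sum_mono)
    fix i j k
    have "\<bar>g $ i\<bar> * \<bar>x $ j\<bar> \<le> norm g * norm x"
      by (intro mult_mono component_le_norm_cart) auto
    then have "\<bar>A i j k\<bar> * \<bar>t $ k\<bar> * (\<bar>g $ i\<bar> * \<bar>x $ j\<bar>) \<le> \<bar>A i j k\<bar> * \<bar>t $ k\<bar> * (norm g * norm x)"
      by (intro mult_left_mono) auto
    then show "\<bar>A i j k * g $ i * x $ j * t $ k\<bar> \<le> \<bar>A i j k\<bar> * \<bar>t $ k\<bar> * (norm g * norm x)"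
      by (simp add: abs_mult algebra_simps)
  qed
  also have "\<dots> = (\<Sum>i\<in>UNIV. \<Sum>j\<in>UNIV. \<Sum>k\<in>UNIV. \<bar>A i j k\<bar> * \<bar>t $ k\<bar>) * (norm g * norm x)"
    by (simp add: sum_distrib_right)
  finally show ?thesis .
qed

definition MA :: "('n::finite \<Rightarrow> 'n \<Rightarrow> 'm::finite \<Rightarrow> real) \<Rightarrow> (real^'m) set \<Rightarrow> real" where
  "MA A S = (\<Sum>t\<in>S. \<Sum>i\<in>UNIV. \<Sum>j\<in>UNIV. \<Sum>k\<in>UNIV. \<bar>A i j k\<bar> * \<bar>t $ k\<bar>)"

context
  fixes A :: "'n::finite \<Rightarrow> 'n \<Rightarrow> 'm::finite \<Rightarrow> real" and S :: "(real^'m) set"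
  assumes fin: "finite S" and ne: "S \<noteq> {}"
begin

lemma FF_upper: "t \<in> S \<Longrightarrow> \<bar>Lf A g x t\<bar> \<le> FF A S g x"
  unfolding FF_def by (rule cSUP_upper) (auto intro!: bdd_above_finite finite_imageI fin)

lemma FF_least: "(\<And>t. t \<in> S \<Longrightarrow> \<bar>Lf A g x t\<bar> \<le> B) \<Longrightarrow> FF A S g x \<le> B"
  unfolding FF_def by (rule cSUP_least) (auto simp: ne)

lemma FF_nonneg: "FF A S g x \<ge> 0"
proof -
  obtain t where "t \<in> S" using ne by auto
  then show ?thesis using FF_upper[of t g x] by linarith
qed

lemma MA_nonneg: "MA A S \<ge> 0"
  unfolding MA_def by (intro sum_nonneg) auto

lemma FF_bound: "FF A S g x \<le> MA A S * (norm g * norm x)"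
proof (rule FF_least)
  fix t assume t: "t \<in> S"
  have "(\<Sum>i\<in>UNIV. \<Sum>j\<in>UNIV. \<Sum>k\<in>UNIV. \<bar>A i j k\<bar> * \<bar>t $ k\<bar>) \<le> MA A S"
    unfolding MA_def using t fin by (intro member_le_sum) (auto intro!: sum_nonneg)
  then have "(\<Sum>i\<in>UNIV. \<Sum>j\<in>UNIV. \<Sum>k\<in>UNIV. \<bar>A i j k\<bar> * \<bar>t $ k\<bar>) * (norm g * norm x) \<le> MA A S * (norm g * norm x)"
    by (intro mult_right_mono) auto
  then show "\<bar>Lf A g x t\<bar> \<le> MA A S * (norm g * norm x)"
    using Lf_bound[of A g x t] by linarith
qed

lemma FF_add: "FF A S g (x + y) \<le> FF A S g x + FF A S g y"
proof (rule FF_least)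
  fix t assume t: "t \<in> S"
  show "\<bar>Lf A g (x + y) t\<bar> \<le> FF A S g x + FF A S g y"
    using FF_upper[OF t, of g x] FF_upper[OF t, of g y] unfolding Lf_add by linarith
qed

lemma FF_scale_le: "FF A S g (c *\<^sub>R x) \<le> \<bar>c\<bar> * FF A S g x"
proof (rule FF_least)
  fix t assume t: "t \<in> S"
  show "\<bar>Lf A g (c *\<^sub>R x) t\<bar> \<le> \<bar>c\<bar> * FF A S g x"
    unfolding Lf_scale abs_mult using FF_upper[OF t, of g x] by (intro mult_left_mono) auto
qed

lemma FF_scale: "FF A S g (c *\<^sub>R x) = \<bar>c\<bar> * FF A S g x"
proof (cases "c = 0")
  case True
  then show ?thesis using FF_scale_le[of g 0 x] FF_nonneg[of g 0] by simp
next
  case False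
  have "FF A S g x = FF A S g (inverse c *\<^sub>R (c *\<^sub>R x))" using False by simp
  also have "\<dots> \<le> \<bar>inverse c\<bar> * FF A S g (c *\<^sub>R x)" by (rule FF_scale_le)
  finally have "\<bar>c\<bar> * FF A S g x \<le> FF A S g (c *\<^sub>R x)"
    using False by (simp add: field_simps abs_inverse)
  then show ?thesis using FF_scale_le[of g c x] by linarith
qed

lemma FF_Max: "FF A S g x = Max ((\<lambda>t. \<bar>Lf A g x t\<bar>) ` S)"
  unfolding FF_def using fin ne by (simp add: cSup_eq_Max)

lemma FF_meas[measurable]: "(\<lambda>g. FF A S g x) \<in> borel_measurable borel"
  unfolding FF_Max using fin by measurable

lemma FF_integrable: "integrable (gauss_measure 1) (\<lambda>g. FF A S g x)"
  by (rule gauss_integrable[where C = "MA A S * norm x"])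
     (use FF_bound FF_nonneg MA_nonneg in \<open>auto simp: algebra_simps\<close>)

lemma beta_add: "beta_AS A S (x + y) \<le> beta_AS A S x + beta_AS A S y"
proof -
  have "(\<integral>g. FF A S g (x + y) \<partial>gauss_measure 1) \<le> (\<integral>g. FF A S g x + FF A S g y \<partial>gauss_measure 1)"
    by (rule integral_mono) (auto intro!: FF_integrable FF_add)
  also have "\<dots> = (\<integral>g. FF A S g x \<partial>gauss_measure 1) + (\<integral>g. FF A S g y \<partial>gauss_measure 1)"
    by (rule Bochner_Integration.integral_add) (auto intro!: FF_integrable)
  finally show ?thesis unfolding beta_FF .
qed

lemma beta_scale: "beta_AS A S (c *\<^sub>R x) = \<bar>c\<bar> * beta_AS A S x"
  unfolding beta_FF FF_scale by simp

lemma beta_nonneg: "beta_AS A S x \<ge> 0"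
  unfolding beta_FF by (rule integral_nonneg_AE) (simp add: FF_nonneg)

lemma norm_gauss_integrable: "integrable (gauss_measure 1 :: (real^'n) measure) norm"
  by (rule gauss_integrable[where C=1]) auto

lemma beta_bound: "beta_AS A S x \<le> (MA A S * (\<integral>g. norm g \<partial>(gauss_measure 1 :: (real^'n) measure))) * norm x"
proof -
  have "beta_AS A S x \<le> (\<integral>g. (MA A S * norm x) * norm g \<partial>(gauss_measure 1 :: (real^'n) measure))"
    unfolding beta_FF
    by (rule integral_mono) (auto intro: FF_integrable norm_gauss_integrable FF_bound[THEN order.trans] simp: algebra_simps)
  then show ?thesis by (simp add: algebra_simps)
qed

lemma beta_lipschitz: "\<bar>beta_AS A S x - beta_AS A S y\<bar> \<le> (MA A S * (\<integral>g. norm g \<partial>(gauss_measure 1 :: (real^'n) measure))) * norm (x - y)"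
proof -
  have "beta_AS A S x \<le> beta_AS A S y + beta_AS A S (x - y)"
    using beta_add[of y "x - y"] by simp
  moreover have "beta_AS A S y \<le> beta_AS A S x + beta_AS A S (x - y)"
    using beta_add[of x "y - x"] beta_scale[of "-1" "x - y"] by (simp add: algebra_simps)
  ultimately show ?thesis using beta_bound[of "x - y"] by linarith
qed

lemma beta_continuous: "continuous_on UNIV (beta_AS A S)"
proof (rule lipschitz_on_continuous_on)
  show "lipschitz_on (max 0 (MA A S * (\<integral>g. norm g \<partial>(gauss_measure 1 :: (real^'n) measure)))) UNIV (beta_AS A S)"
    unfolding lipschitz_on_def dist_real_def dist_norm
    using beta_lipschitz by (auto intro: order.trans[OF _ mult_right_mono[OF max.cobounded2]])
qed

lemma beta_meas[measurable]: "beta_AS A S \<in> borel_measurable borel"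
  using beta_continuous by (rule borel_measurable_continuous_onI)

lemma beta_integrable: "integrable (gauss_measure 1) (beta_AS A S)"
  by (rule gauss_integrable[where C = "MA A S * (\<integral>g. norm g \<partial>(gauss_measure 1 :: (real^'n) measure))"])
     (use beta_bound beta_nonneg MA_nonneg in \<open>auto intro: integral_nonneg_AE\<close>)

end


lemma alpha_tensor_expand:
  "alpha_A A (tensor z t) = sqrt (\<Sum>i\<in>UNIV. (\<Sum>j\<in>UNIV. \<Sum>k\<in>UNIV. A i j k * (z $ j * t $ k))^2)"
  unfolding alpha_A_def tensor_def ..

lemma alpha_nonneg: "alpha_A A y \<ge> 0"
  unfolding alpha_A_def by (simp add: sum_nonneg)

lemma alpha_tri: "alpha_A A (\<lambda>j k. y j k + y' j k) \<le> alpha_A A y + alpha_A A y'"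
proof -
  have "alpha_A A (\<lambda>j k. y j k + y' j k) = L2_set (\<lambda>i. (\<Sum>j\<in>UNIV. \<Sum>k\<in>UNIV. A i j k * y j k) + (\<Sum>j\<in>UNIV. \<Sum>k\<in>UNIV. A i j k * y' j k)) UNIV"
    unfolding alpha_A_def L2_set_def by (simp add: algebra_simps sum.distrib)
  also have "\<dots> \<le> L2_set (\<lambda>i. (\<Sum>j\<in>UNIV. \<Sum>k\<in>UNIV. A i j k * y j k)) UNIV + L2_set (\<lambda>i. (\<Sum>j\<in>UNIV. \<Sum>k\<in>UNIV. A i j k * y' j k)) UNIV"
    by (rule L2_set_triangle_ineq)
  also have "\<dots> = alpha_A A y + alpha_A A y'"
    unfolding alpha_A_def L2_set_def ..
  finally show ?thesis .
qed

lemma alpha_tensor_scale: "alpha_A A (tensor (c *\<^sub>R z) t) = \<bar>c\<bar> * alpha_A A (tensor z t)"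
proof -
  have "(\<Sum>i\<in>UNIV. (\<Sum>j\<in>UNIV. \<Sum>k\<in>UNIV. A i j k * ((c *\<^sub>R z) $ j * t $ k))^2)
      = c^2 * (\<Sum>i\<in>UNIV. (\<Sum>j\<in>UNIV. \<Sum>k\<in>UNIV. A i j k * (z $ j * t $ k))^2)"
    by (simp add: sum_distrib_left power_mult_distrib[symmetric] algebra_simps)
  then show ?thesis unfolding alpha_tensor_expand by (simp add: real_sqrt_mult)
qed

lemma alpha_tensor_meas[measurable]: "(\<lambda>z. alpha_A A (tensor z t)) \<in> borel_measurable borel"
  unfolding alpha_tensor_expand by measurable

definition CT :: "('n::finite \<Rightarrow> 'n \<Rightarrow> 'm::finite \<Rightarrow> real) \<Rightarrow> real^'m \<Rightarrow> real" where
  "CT A t = (\<Sum>i\<in>UNIV. \<Sum>j\<in>UNIV. \<Sum>k\<in>UNIV. \<bar>A i j k\<bar> * \<bar>t $ k\<bar>)"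

lemma CT_nonneg: "CT A t \<ge> 0"
  unfolding CT_def by (intro sum_nonneg) auto

lemma alpha_tensor_bound: "alpha_A A (tensor z t) \<le> CT A t * norm z"
proof -
  have "alpha_A A (tensor z t) = L2_set (\<lambda>i. \<Sum>j\<in>UNIV. \<Sum>k\<in>UNIV. A i j k * (z $ j * t $ k)) UNIV"
    unfolding alpha_tensor_expand L2_set_def ..
  also have "\<dots> \<le> (\<Sum>i\<in>UNIV. \<bar>\<Sum>j\<in>UNIV. \<Sum>k\<in>UNIV. A i j k * (z $ j * t $ k)\<bar>)"
    by (rule L2_set_le_sum_abs)
  also have "\<dots> \<le> (\<Sum>i\<in>UNIV. \<Sum>j\<in>UNIV. \<Sum>k\<in>UNIV. \<bar>A i j k * (z $ j * t $ k)\<bar>)"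
    by (rule sum_mono order.trans[OF sum_abs] sum_mono sum_abs)+
  also have "\<dots> \<le> (\<Sum>i\<in>UNIV. \<Sum>j\<in>UNIV. \<Sum>k\<in>UNIV. \<bar>A i j k\<bar> * \<bar>t $ k\<bar> * norm z)"
  proof (intro sum_mono)
    fix i j k
    have "\<bar>A i j k\<bar> * \<bar>t $ k\<bar> * \<bar>z $ j\<bar> \<le> \<bar>A i j k\<bar> * \<bar>t $ k\<bar> * norm z"
      by (intro mult_left_mono component_le_norm_cart) auto
    then show "\<bar>A i j k * (z $ j * t $ k)\<bar> \<le> \<bar>A i j k\<bar> * \<bar>t $ k\<bar> * norm z"
      by (simp add: abs_mult algebra_simps)
  qed
  also have "\<dots> = CT A t * norm z"
    unfolding CT_def by (simp add: sum_distrib_right)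
  finally show ?thesis .
qed

lemma alpha_tensor_integrable:
  fixes A :: "'n::finite \<Rightarrow> 'n \<Rightarrow> 'm::finite \<Rightarrow> real" and t :: "real^'m"
  shows "integrable (gauss_measure 1) (\<lambda>g. alpha_A A (tensor g t))"
proof (rule gauss_integrable[where C = "CT A t"])
  fix g :: "real^'n"
  show "\<bar>alpha_A A (tensor g t)\<bar> \<le> CT A t * norm g"
    using alpha_tensor_bound[of A g t] alpha_nonneg[of A "tensor g t"] by simp
qed (simp_all add: CT_nonneg)

lemma markov4:
  fixes u :: "'a \<Rightarrow> real"
  assumes P: "prob_space M" and u: "integrable M u" and nn: "\<And>x. x \<in> space M \<Longrightarrow> 0 \<le> u x"
  shows "measure M {x\<in>space M. 4 * integral\<^sup>L M u < u x} \<le> 1/4"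
proof -
  interpret prob_space M by (rule P)
  have [measurable]: "u \<in> borel_measurable M" using u by (rule borel_measurable_integrable)
  define c where "c = integral\<^sup>L M u"
  have c0: "c \<ge> 0" unfolding c_def using nn by (intro integral_nonneg_AE) auto
  show ?thesis
  proof (cases "c = 0")
    case False
    then have cp: "c > 0" using c0 by simp
    have "measure M {x\<in>space M. 4 * c < u x} \<le> measure M {x\<in>space M. u x \<ge> 4 * c}"
      by (intro finite_measure_mono) auto
    also have "\<dots> \<le> (\<integral>x. u x \<partial>M) / (4 * c)"
      by (rule integral_Markov_inequality_measure[where A="space M"]) (use u nn cp in auto)
    also have "\<dots> = 1/4" using cp unfolding c_def by simp
    finally show ?thesis unfolding c_def .
  next
    case True
    have "AE x in M. u x = 0"
      using True unfolding c_def using integral_nonneg_eq_0_iff_AE[OF u] nn by auto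
    then have "emeasure M {x\<in>space M. \<not> u x = 0} = 0"
      by (subst AE_iff_measurable[symmetric]) auto
    then have "emeasure M {x\<in>space M. 4 * c < u x} = 0"
      using True by (auto intro: emeasure_eq_0[of "{x\<in>space M. \<not> u x = 0}"])
    then show ?thesis unfolding c_def by (simp add: measure_def)
  qed
qed


theorem lemma5p2:
  fixes A :: "'n::finite \<Rightarrow> 'n \<Rightarrow> 'm::finite \<Rightarrow> real"
    and S :: "(real^'m) set"
    and eps :: real
    and Sx :: "real^'n \<Rightarrow> (real^'m) set"
  assumes "finite S" and "S \<noteq> {}" and "eps > 0"
    and "\<And>x. Sx x \<subseteq> S"
    and "\<And>t. t \<in> S \<Longrightarrow> {x. t \<in> Sx x} \<in> sets borel"
    and "\<And>x t. t \<in> S \<Longrightarrow> \<exists>t'\<in>Sx x.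
            alpha_A A (tensor x (t - t')) \<le> eps * beta_AS A S x"
    and "norm x \<le> 1" and "t \<in> S"
  shows "mu_eps eps Sx (ball_dA A S (x, t)
           (4 * eps^2 * (\<integral>g. beta_AS A S g \<partial>(gauss_measure 1))
            + eps * beta_AS A S x
            + 4 * eps * (\<integral>g. alpha_A A (tensor g t) \<partial>(gauss_measure 1))))
         \<ge> ennreal (1/2 * exp (- (1 / eps^2) / 2))"
proof -
  have fin: "finite S" and ne: "S \<noteq> {}" and e: "eps > 0" using assms(1-3) .
  note beta_meas[OF fin ne, measurable]
  define cb where "cb = (\<integral>g. beta_AS A S g \<partial>(gauss_measure 1 :: (real^'n) measure))"
  define ca where "ca = (\<integral>g. alpha_A A (tensor g t) \<partial>(gauss_measure 1 :: (real^'n) measure))"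
  define r where "r = 4 * eps^2 * cb + eps * beta_AS A S x + 4 * eps * ca"
  define K where "K = {z::real^'n. alpha_A A (tensor z t) \<le> 4 * eps * ca \<and> beta_AS A S z \<le> 4 * eps * cb}"
  define B where "B = ball_dA A S (x, t) r"
  have Km[measurable]: "K \<in> sets borel" unfolding K_def by measurable
  have neg: "- z = (-1) *\<^sub>R z" for z :: "real^'n" by simp
  have Ksym: "- z \<in> K" if "z \<in> K" for z
  proof -
    have "alpha_A A (tensor (- z) t) = alpha_A A (tensor z t)" using alpha_tensor_scale[where c="-1" and z=z and t=t and A=A] by simp
    moreover have "beta_AS A S (- z) = beta_AS A S z" using beta_scale[OF fin ne, where c="-1" and x=z] by simp
    ultimately show ?thesis using that unfolding K_def by simp
  qed
  interpret P: prob_space "gauss_measure 1 :: (real^'n) measure" by (rule gauss_prob) simp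
  define pre where "pre = {g::real^'n. alpha_A A (tensor g t) \<le> 4 * ca \<and> beta_AS A S g \<le> 4 * cb}"
  have pre_eq: "(\<lambda>g. eps *\<^sub>R g) -` K = pre"
    unfolding K_def pre_def using e
    by (auto simp: alpha_tensor_scale beta_scale[OF fin ne] mult.assoc)
  have pre_m[measurable]: "pre \<in> sets borel" unfolding pre_def by measurable
  define B1 where "B1 = {g \<in> space (gauss_measure 1 :: (real^'n) measure). 4 * ca < alpha_A A (tensor g t)}"
  define B2 where "B2 = {g \<in> space (gauss_measure 1 :: (real^'n) measure). 4 * cb < beta_AS A S g}"
  have B1m: "B1 \<in> P.events" unfolding B1_def space_gauss sets_gauss by measurable
  have B2m: "B2 \<in> P.events" unfolding B2_def space_gauss sets_gauss by measurable
  have mB1: "P.prob B1 \<le> 1/4"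
    unfolding B1_def ca_def
    by (rule markov4[OF gauss_prob alpha_tensor_integrable]) (simp_all add: alpha_nonneg)
  have mB2: "P.prob B2 \<le> 1/4"
    unfolding B2_def cb_def
    by (rule markov4[OF gauss_prob beta_integrable[OF fin ne]]) (simp_all add: beta_nonneg[OF fin ne])
  have "UNIV = pre \<union> (B1 \<union> B2)" unfolding pre_def B1_def B2_def by auto
  then have "1 = P.prob (pre \<union> (B1 \<union> B2))" using P.prob_space by simp
  also have "\<dots> \<le> P.prob pre + P.prob (B1 \<union> B2)"
    by (rule measure_subadditive) (use B1m B2m pre_m in \<open>auto simp: P.emeasure_eq_measure\<close>)
  also have "P.prob (B1 \<union> B2) \<le> P.prob B1 + P.prob B2"
    by (rule measure_subadditive) (use B1m B2m pre_m in \<open>auto simp: P.emeasure_eq_measure\<close>)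
  finally have ppre: "P.prob pre \<ge> 1/2" using mB1 mB2 by linarith
  have gK: "emeasure (gauss_measure eps) K \<ge> ennreal (1/2)"
  proof -
    have "emeasure (gauss_measure eps) K = emeasure (gauss_measure 1) pre"
      using gauss_scale[OF e Km] unfolding pre_eq .
    also have "\<dots> = ennreal (P.prob pre)" by (rule P.emeasure_eq_measure)
    finally show ?thesis using ennreal_leI[OF ppre] by simp
  qed
  have shift: "ennreal (exp (- ((norm x)^2) / (2 * eps^2))) * emeasure (gauss_measure eps) K
           \<le> emeasure (gauss_measure eps) {y. y - x \<in> K}"
    by (rule gauss_shift[OF e Km Ksym])
  have ex: "exp (- (1 / eps^2) / 2) \<le> exp (- ((norm x)^2) / (2 * eps^2))"
  proof -
    have "(norm x)^2 \<le> 1" using assms(7) by (simp add: power_le_one)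
    then have "(norm x)^2 / (2 * eps^2) \<le> 1 / (2 * eps^2)" using e by (intro divide_right_mono) auto
    then show ?thesis by simp
  qed
  have low: "ennreal (1/2 * exp (- (1 / eps^2) / 2)) \<le> emeasure (gauss_measure eps) {y. y - x \<in> K}"
  proof -
    have "ennreal (1/2 * exp (- (1 / eps^2) / 2)) = ennreal (exp (- (1 / eps^2) / 2)) * ennreal (1/2)"
      by (subst ennreal_mult[symmetric]) (simp_all add: mult.commute)
    also have "\<dots> \<le> ennreal (exp (- ((norm x)^2) / (2 * eps^2))) * emeasure (gauss_measure eps) K"
      using ex gK by (intro mult_mono) (auto intro: ennreal_leI)
    also have "\<dots> \<le> emeasure (gauss_measure eps) {y. y - x \<in> K}" by (rule shift)
    finally show ?thesis .
  qed
  have Kx[measurable]: "{y. y - x \<in> K} \<in> sets borel"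
    using measurable_sets[of "\<lambda>y::real^'n. y - x" borel borel K] by (simp add: vimage_def)
  have inB: "(y, t') \<in> B" if yK: "y - x \<in> K" and t'S: "t' \<in> Sx y"
    and t'a: "alpha_A A (tensor y (t - t')) \<le> eps * beta_AS A S y" for y t'
  proof -
    have "t' \<in> S" using t'S assms(4) by auto
    have eq: "(\<lambda>j k. tensor x t j k - tensor y t' j k) = (\<lambda>j k. tensor ((-1) *\<^sub>R (y - x)) t j k + tensor y (t - t') j k)"
      by (auto simp: tensor_def algebra_simps fun_eq_iff)
    have "d_A A (x, t) (y, t') = alpha_A A (\<lambda>j k. tensor ((-1) *\<^sub>R (y - x)) t j k + tensor y (t - t') j k)"
      unfolding d_A_def using eq by simp
    also have "\<dots> \<le> alpha_A A (tensor ((-1) *\<^sub>R (y - x)) t) + alpha_A A (tensor y (t - t'))"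
      by (rule alpha_tri)
    also have "\<dots> = alpha_A A (tensor (y - x) t) + alpha_A A (tensor y (t - t'))"
      using alpha_tensor_scale[where c="-1" and z="y - x" and t=t and A=A] by simp
    finally have d1: "d_A A (x, t) (y, t') \<le> alpha_A A (tensor (y - x) t) + alpha_A A (tensor y (t - t'))" .
    have a1: "alpha_A A (tensor (y - x) t) \<le> 4 * eps * ca" and b1: "beta_AS A S (y - x) \<le> 4 * eps * cb"
      using yK unfolding K_def by auto
    have "beta_AS A S y \<le> beta_AS A S x + beta_AS A S (y - x)"
      using beta_add[OF fin ne, where x=x and y="y - x"] by simp
    then have "eps * beta_AS A S y \<le> eps * (beta_AS A S x + 4 * eps * cb)"
      using b1 e by (intro mult_left_mono) auto
    then have "d_A A (x, t) (y, t') \<le> r"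
      using d1 a1 t'a unfolding r_def by (simp add: algebra_simps power2_eq_square)
    then show ?thesis using \<open>t' \<in> S\<close> unfolding B_def ball_dA_def by simp
  qed
  have "emeasure (gauss_measure eps) {y. y - x \<in> K} = (\<integral>\<^sup>+y. indicator {y. y - x \<in> K} y \<partial>(gauss_measure eps))"
    by (rule nn_integral_indicator[symmetric]) simp
  also have "\<dots> \<le> (\<integral>\<^sup>+y. (\<Sum>t'\<in>Sx y. indicator B (y, t')) \<partial>(gauss_measure eps))"
  proof (rule nn_integral_mono)
    fix y :: "real^'n"
    show "indicator {y. y - x \<in> K} y \<le> (\<Sum>t'\<in>Sx y. indicator B (y, t') :: ennreal)"
    proof (cases "y - x \<in> K")
      case True
      obtain t' where t'S: "t' \<in> Sx y" and t'a: "alpha_A A (tensor y (t - t')) \<le> eps * beta_AS A S y"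
        using assms(6)[OF assms(8), of y] by auto
      have finS: "finite (Sx y)" using fin assms(4) by (rule finite_subset[rotated])
      have "(indicator B (y, t') :: ennreal) \<le> (\<Sum>t'\<in>Sx y. indicator B (y, t'))"
        by (rule member_le_sum) (use t'S finS in auto)
      moreover have "(indicator B (y, t') :: ennreal) = 1"
        using inB[OF True t'S t'a] by simp
      ultimately show ?thesis using True by simp
    qed simp
  qed
  also have "\<dots> = mu_eps eps Sx B" unfolding mu_eps_def ..
  finally show ?thesis using low unfolding B_def r_def cb_def ca_def by simp
qed

end
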